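(* Let $\lambda>0$, $f$ twice continuously differentiable with $f(y)\le f(x)+\nabla f(x)^\top(y-x)+\frac12(y-x)^\top\nabla^2f(x)(y-x)+\frac{L_H}6\|y-x\|^3$ for the relevant points, $\varphi=f+\lambda\|\cdot\|_1$, and $0<\varepsilon_g<1$. Let $x^k\in\mathbb{R}^n$, $I^k_{\neq0}=\{i:x^k_i\neq0\}$, $I^k_0=\{i:x^k_i=0\}$, $S^k=\mathrm{Diag}(s)$ with $s_i=1$ if $|x^k_i|>\varepsilon_g^{1/2}$ and $s_i=x^k_i$ otherwise, $H^k_{\neq0}=(\nabla^2f(x^k))_{I^k_{\neq0}}$, $S^k_{\neq0}=S^k_{I^k_{\neq0}}$, and $g^k=g(x^k)$. Let $u$ be a unit vector with $u^\top S^k_{\neq0}H^k_{\neq0}S^k_{\neq0}u\le-\frac12\varepsilon_h$ (as returned by the minimum eigenvalue oracle), and let $d^k_{I^k_{\neq0}}=-\mathrm{sgn}((g^k_{I^k_{\neq0}})^\top S^k_{\neq0}u)\,|u^\top S^k_{\neq0}H^k_{\neq0}S^k_{\neq0}u|\,u$, $d^k_{I^k_0}=0$. Define $J^k_+=\{i:x^k_i>\varepsilon_g^{1/2},\ d^k_i<0\}$, $J^k_0=\{i:|x^k_i|\le\varepsilon_g^{1/2},\ d^k_i<0\}$, $J^k_-=\{i:x^k_i<-\varepsilon_g^{1/2},\ d^k_i>0\}$, and $t^k_+=\min_{i\in J^k_+}\{-x^k_i/d^k_i\}$, $t^k_-=\min_{i\in J^k_-}\{-x^k_i/d^k_i\}$,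 $t^k_0=\min_{i\in J^k_0}\{-1/d^k_i\}$ (each $+\infty$ if the corresponding set is empty). Then for every $t\in(0,\min\{t^k_+,t^k_-,t^k_0\}]$, $$\varphi(x^k+tS^kd^k)\le\varphi(x^k)+t(g^k_{\neq0})^\top S^k_{\neq0}d^k_{\neq0}+\frac{t^2}2(d^k_{\neq0})^\top S^k_{\neq0}H^k_{\neq0}S^k_{\neq0}d^k_{\neq0}+\frac{L_H}6t^3\|d^k_{\neq0}\|^3,$$ where $g^k_{\neq0}=g^k_{I^k_{\neq0}}$ and $d^k_{\neq0}=d^k_{I^k_{\neq0}}$.
   Context: $g(x)$ is defined by $g_i=(\nabla f(x))_i+\lambda$ if $x_i>0$, $(\nabla f(x))_i-\lambda$ if $x_i<0$, $(\nabla f(x))_i-\min\{\max\{-\lambda,(\nabla f(x))_i\},\lambda\}$ if $x_i=0$; $\mathrm{sgn}(0)=1$; $A_J$ denotes the principal submatrix (or subvector) on index set $J$. In the paper this is the situation of the second phase of HPGNCM at iteration $k$, in which the cubic upper bound on $f$ holds with constant $L_H$ on the level set $\{x:\varphi(x)\le\varphi(x^0)\}$ (f twice uniformly Lipschitz continuously differentiable near a bounded level set). *)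

theory Defs
  imports "HOL-Analysis.Analysis"
begin

text \<open>Sign with the paper's convention sgn(0) = 1.\<close>
definition sgn1 :: "real \<Rightarrow> real" where
  "sgn1 a = (if a \<ge> 0 then 1 else -1)"

definition l1norm :: "real^'n \<Rightarrow> real" where
  "l1norm x = (\<Sum>i\<in>UNIV. \<bar>x$i\<bar>)"

definition phi :: "(real^'n \<Rightarrow> real) \<Rightarrow> real \<Rightarrow> real^'n \<Rightarrow> real" where
  "phi f lam x = f x + lam * l1norm x"

definition gvec :: "(real^'n \<Rightarrow> real^'n) \<Rightarrow> real \<Rightarrow> real^'n \<Rightarrow> real^'n" where
  "gvec grad lam x = (\<chi> i. if x$i > 0 then grad x $ i + lam
                        else if x$i < 0 then grad x $ i - lam
                        else grad x $ i - min (max (-lam) (grad x $ i)) lam)"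

definition Inz :: "real^'n \<Rightarrow> 'n set" where
  "Inz x = {i. x$i \<noteq> 0}"

definition Izero :: "real^'n \<Rightarrow> 'n set" where
  "Izero x = {i. x$i = 0}"

definition svec :: "real \<Rightarrow> real^'n \<Rightarrow> real^'n" where
  "svec epsg x = (\<chi> i. if \<bar>x$i\<bar> > sqrt epsg then 1 else x$i)"

definition Smat :: "real \<Rightarrow> real^'n \<Rightarrow> real^'n^'n" where
  "Smat epsg x = (\<chi> i j. if i = j then svec epsg x $ i else 0)"

definition subquad :: "'n set \<Rightarrow> real^'n^'n \<Rightarrow> real^'n \<Rightarrow> real" where
  "subquad I A v = (\<Sum>i\<in>I. \<Sum>j\<in>I. v$i * A$i$j * v$j)"

definition subbil :: "'n set \<Rightarrow> real^'n \<Rightarrow> real^'n^'n \<Rightarrow> real^'n \<Rightarrow> real" where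
  "subbil I a A b = (\<Sum>i\<in>I. \<Sum>j\<in>I. a$i * A$i$j * b$j)"

definition subnorm :: "'n set \<Rightarrow> real^'n \<Rightarrow> real" where
  "subnorm I v = sqrt (\<Sum>i\<in>I. (v$i)^2)"

text \<open>Direction d^k built from the (sub)vector u (entries of u on I are used).\<close>
definition dir :: "real \<Rightarrow> real^'n \<Rightarrow> real^'n^'n \<Rightarrow> real^'n \<Rightarrow> real^'n \<Rightarrow> real^'n" where
  "dir epsg x H g u =
     (let I = Inz x; S = Smat epsg x in
      (\<chi> i. if i \<in> I then
              - sgn1 (subbil I g S u) * \<bar>subquad I (S ** H ** S) u\<bar> * u$i
            else 0))"

definition Jplus :: "real \<Rightarrow> real^'n \<Rightarrow> real^'n \<Rightarrow> 'n set" where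
  "Jplus epsg x d = {i. x$i > sqrt epsg \<and> d$i < 0}"

definition Jzero :: "real \<Rightarrow> real^'n \<Rightarrow> real^'n \<Rightarrow> 'n set" where
  "Jzero epsg x d = {i. \<bar>x$i\<bar> \<le> sqrt epsg \<and> d$i < 0}"

definition Jminus :: "real \<Rightarrow> real^'n \<Rightarrow> real^'n \<Rightarrow> 'n set" where
  "Jminus epsg x d = {i. x$i < - sqrt epsg \<and> d$i > 0}"

definition emin :: "'n set \<Rightarrow> ('n \<Rightarrow> real) \<Rightarrow> ereal" where
  "emin J h = (if J = {} then \<infinity> else ereal (Min (h ` J)))"

definition tplus :: "real \<Rightarrow> real^'n \<Rightarrow> real^'n \<Rightarrow> ereal" where
  "tplus epsg x d = emin (Jplus epsg x d) (\<lambda>i. - x$i / d$i)"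

definition tminus :: "real \<Rightarrow> real^'n \<Rightarrow> real^'n \<Rightarrow> ereal" where
  "tminus epsg x d = emin (Jminus epsg x d) (\<lambda>i. - x$i / d$i)"

definition tzero :: "real \<Rightarrow> real^'n \<Rightarrow> real^'n \<Rightarrow> ereal" where
  "tzero epsg x d = emin (Jzero epsg x d) (\<lambda>i. - 1 / d$i)"

end

theory Submission
  imports Defs
begin

lemma if0_mult: "(if P then a else 0) * (b::real) = (if P then a * b else 0)" by simp

lemma mult_if0: "(a::real) * (if P then b else 0) = (if P then a * b else 0)" by simp

lemma sum_restr:
  fixes f :: "'n::finite \<Rightarrow> real"
  assumes "\<And>i. i \<notin> I \<Longrightarrow> f i = 0"
  shows "sum f I = sum f UNIV"
  by (rule sum.mono_neutral_left) (auto simp: assms)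

lemma Smat_mult: "Smat e x *v v = (\<chi> i. svec e x $ i * v $ i)"
  by (simp add: Smat_def matrix_vector_mult_def vec_eq_iff if0_mult mult_if0 cong: if_cong)

lemma SHS: "(Smat e x ** H ** Smat e x) $ i $ j = svec e x $ i * H $ i $ j * svec e x $ j"
  by (simp add: Smat_def matrix_matrix_mult_def if0_mult mult_if0 sum.delta sum.delta' cong: if_cong)

lemma Smat_entry: "Smat e x $ i $ j = (if i = j then svec e x $ i else 0)"
  by (simp add: Smat_def)

lemma emin_le:
  fixes J :: "'n::finite set"
  assumes "i \<in> J" "ereal t \<le> emin J h"
  shows "t \<le> h i"
proof -
  have "J \<noteq> {}" using assms by auto
  then have "t \<le> Min (h ` J)" using assms by (simp add: emin_def)
  also have "\<dots> \<le> h i" using assms by (intro Min_le) auto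
  finally show ?thesis .
qed

lemma svec_abs: "epsg < 1 \<Longrightarrow> 0 < epsg \<Longrightarrow> \<bar>svec epsg x $ i\<bar> \<le> 1"
proof -
  assume a: "epsg < 1" "0 < epsg"
  have "sqrt epsg < 1" using a by simp
  show ?thesis
  proof (cases "sqrt epsg < \<bar>x $ i\<bar>")
    case False
    then have "svec epsg x $ i = x $ i" by (simp add: svec_def)
    then show ?thesis using False \<open>sqrt epsg < 1\<close> by linarith
  qed (simp add: svec_def)
qed

theorem lemma5:
  fixes f :: "real^'n \<Rightarrow> real"
    and grad :: "real^'n \<Rightarrow> real^'n"
    and Hess :: "real^'n \<Rightarrow> real^'n^'n"
    and lam epsg epsh LH :: real
    and xk u :: "real^'n"
  assumes lam_pos: "lam > 0"
    and epsg: "0 < epsg" "epsg < 1"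
    and LH_nonneg: "LH \<ge> 0"
    and grad: "\<And>x. (f has_derivative (\<lambda>h. grad x \<bullet> h)) (at x)"
    and hess: "\<And>x. (grad has_derivative (\<lambda>h. Hess x *v h)) (at x)"
    and hess_cont: "continuous_on UNIV Hess"
    and u_unit: "subnorm (Inz xk) u = 1"
    and u_curv: "subquad (Inz xk) (Smat epsg xk ** Hess xk ** Smat epsg xk) u \<le> - epsh / 2"
    and cubic: "\<And>t. t > 0 \<Longrightarrow>
        ereal t \<le> min (min (tplus epsg xk (dir epsg xk (Hess xk) (gvec grad lam xk) u))
                             (tminus epsg xk (dir epsg xk (Hess xk) (gvec grad lam xk) u)))
                        (tzero epsg xk (dir epsg xk (Hess xk) (gvec grad lam xk) u)) \<Longrightarrow>
        (let y = xk + t *\<^sub>R (Smat epsg xk *v dir epsg xk (Hess xk) (gvec grad lam xk) u) in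
         f y \<le> f xk + grad xk \<bullet> (y - xk) + 1/2 * ((y - xk) \<bullet> (Hess xk *v (y - xk)))
                + LH / 6 * norm (y - xk) ^ 3)"
  shows "\<And>t. t > 0 \<Longrightarrow>
        ereal t \<le> min (min (tplus epsg xk (dir epsg xk (Hess xk) (gvec grad lam xk) u))
                             (tminus epsg xk (dir epsg xk (Hess xk) (gvec grad lam xk) u)))
                        (tzero epsg xk (dir epsg xk (Hess xk) (gvec grad lam xk) u)) \<Longrightarrow>
        (let I = Inz xk; S = Smat epsg xk; H = Hess xk; g = gvec grad lam xk;
             d = dir epsg xk H g u in
         phi f lam (xk + t *\<^sub>R (S *v d))
           \<le> phi f lam xk + t * subbil I g S d + t^2 / 2 * subquad I (S ** H ** S) d
              + LH / 6 * t^3 * subnorm I d ^ 3)"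
proof -
  fix t :: real
  assume t: "t > 0" and tle: "ereal t \<le> min (min (tplus epsg xk (dir epsg xk (Hess xk) (gvec grad lam xk) u))
                             (tminus epsg xk (dir epsg xk (Hess xk) (gvec grad lam xk) u)))
                        (tzero epsg xk (dir epsg xk (Hess xk) (gvec grad lam xk) u))"
  define I where "I = Inz xk"
  define g where "g = gvec grad lam xk"
  define H where "H = Hess xk"
  define d where "d = dir epsg xk H g u"
  define s where "s = svec epsg xk"
  define y where "y = xk + t *\<^sub>R (Smat epsg xk *v d)"
  define sg where "sg = (\<lambda>i. if xk$i > 0 then 1 else -1::real)"
  have cub: "f y \<le> f xk + grad xk \<bullet> (y - xk) + 1/2 * ((y - xk) \<bullet> (H *v (y - xk)))
                + LH / 6 * norm (y - xk) ^ 3"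
    using cubic[OF t tle] by (simp add: y_def d_def H_def g_def Let_def)
  have d0: "\<And>i. i \<notin> I \<Longrightarrow> d$i = 0"
    by (simp add: d_def dir_def Let_def I_def)
  have yx: "y - xk = t *\<^sub>R (\<chi> i. s$i * d$i)"
    by (simp add: y_def Smat_mult s_def)
  have tp: "ereal t \<le> tplus epsg xk d" and tm: "ereal t \<le> tminus epsg xk d"
    and tz: "ereal t \<le> tzero epsg xk d"
    using tle by (auto simp: d_def H_def g_def)
  have coord: "\<bar>y$i\<bar> = \<bar>xk$i\<bar> + (if i \<in> I then t * (sg i * s$i * d$i) else 0)" for i
  proof (cases "i \<in> I")
    case False
    then show ?thesis using d0[OF False] by (simp add: y_def Smat_mult)
  next
    case True
    then have xne: "xk$i \<noteq> 0" by (simp add: I_def Inz_def)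
    have yi: "y$i = xk$i + t * (s$i * d$i)" by (simp add: y_def Smat_mult s_def)
    have "sg i * y$i \<ge> 0"
    proof (cases "\<bar>xk$i\<bar> > sqrt epsg")
      case big: True
      have si: "s$i = 1" using big by (simp add: s_def svec_def)
      show ?thesis
      proof (cases "xk$i > 0")
        case pos: True
        show ?thesis
        proof (cases "d$i < 0")
          case True
          have "i \<in> Jplus epsg xk d" using True pos big by (auto simp: Jplus_def)
          then have "t \<le> - xk$i / d$i" using tp by (auto simp: tplus_def intro: emin_le)
          then have "t * d$i \<ge> - xk$i" using True by (simp add: divide_simps mult.commute)
          then show ?thesis using pos by (simp add: sg_def yi si)
        next
          case False
          then show ?thesis using pos t by (simp add: sg_def yi si)
        qed
      next
        case neg: False
        with xne have neg: "xk$i < 0" by simp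
        show ?thesis
        proof (cases "d$i > 0")
          case True
          have "i \<in> Jminus epsg xk d" using True neg big by (auto simp: Jminus_def)
          then have "t \<le> - xk$i / d$i" using tm by (auto simp: tminus_def intro: emin_le)
          then have "t * d$i \<le> - xk$i" using True by (simp add: divide_simps mult.commute)
          then show ?thesis using neg by (simp add: sg_def yi si)
        next
          case False
          then have "t * d$i \<le> 0" using t by (simp add: mult_nonneg_nonpos)
          then show ?thesis using neg by (simp add: sg_def yi si)
        qed
      qed
    next
      case small: False
      have si: "s$i = xk$i" using small by (simp add: s_def svec_def)
      have "1 + t * d$i \<ge> 0"
      proof (cases "d$i < 0")
        case True
        have "i \<in> Jzero epsg xk d" using True small by (auto simp: Jzero_def)
        then have "t \<le> - 1 / d$i" using tz by (auto simp: tzero_def intro: emin_le)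
        then show ?thesis using True by (simp add: divide_simps mult.commute)
      next
        case False
        then show ?thesis using t by simp
      qed
      then have "y$i = xk$i * (1 + t * d$i)" by (simp add: yi si algebra_simps)
      then show ?thesis using \<open>1 + t * d$i \<ge> 0\<close> xne
        by (auto simp: sg_def mult_nonneg_nonneg mult_nonpos_nonneg)
    qed
    then have "\<bar>y$i\<bar> = sg i * y$i" by (auto simp: sg_def split: if_splits)
    also have "\<dots> = \<bar>xk$i\<bar> + t * (sg i * s$i * d$i)" using xne
      by (auto simp: sg_def yi algebra_simps)
    finally show ?thesis using True by simp
  qed
  have l1: "l1norm y = l1norm xk + t * (\<Sum>i\<in>UNIV. sg i * s$i * d$i)"
  proof -
    have "l1norm y = (\<Sum>i\<in>UNIV. \<bar>xk$i\<bar> + (if i \<in> I then t * (sg i * s$i * d$i) else 0))"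
      by (simp add: l1norm_def coord)
    also have "\<dots> = l1norm xk + (\<Sum>i\<in>UNIV. t * (sg i * s$i * d$i))"
      by (simp add: sum.distrib l1norm_def) (intro sum.cong, auto simp: d0)
    finally show ?thesis by (simp add: sum_distrib_left)
  qed
  have gI: "\<And>i. i \<in> I \<Longrightarrow> g$i = grad xk $ i + lam * sg i"
    by (auto simp: g_def gvec_def sg_def I_def Inz_def)
  have bil: "subbil I g (Smat epsg xk) d = (\<Sum>i\<in>UNIV. grad xk $ i * s$i * d$i) + lam * (\<Sum>i\<in>UNIV. sg i * s$i * d$i)"
  proof -
    have "subbil I g (Smat epsg xk) d = (\<Sum>i\<in>I. g$i * s$i * d$i)"
      unfolding subbil_def Smat_entry s_def
      by (intro sum.cong refl) (simp add: if0_mult mult_if0 sum.delta cong: if_cong)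
    also have "\<dots> = (\<Sum>i\<in>I. grad xk $ i * s$i * d$i + lam * (sg i * s$i * d$i))"
      by (intro sum.cong refl) (simp add: gI algebra_simps)
    also have "\<dots> = (\<Sum>i\<in>UNIV. grad xk $ i * s$i * d$i + lam * (sg i * s$i * d$i))"
      by (rule sum_restr) (simp add: d0)
    finally show ?thesis by (simp add: sum.distrib sum_distrib_left)
  qed
  have lin: "grad xk \<bullet> (y - xk) = t * (\<Sum>i\<in>UNIV. grad xk $ i * s$i * d$i)"
    by (simp add: yx inner_vec_def sum_distrib_left algebra_simps)
  have quad: "(y - xk) \<bullet> (H *v (y - xk)) = t^2 * subquad I (Smat epsg xk ** H ** Smat epsg xk) d"
  proof -
    have "(y - xk) \<bullet> (H *v (y - xk)) = t^2 * (\<Sum>i\<in>UNIV. \<Sum>j\<in>UNIV. d$i * (s$i * H$i$j * s$j) * d$j)"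
      by (simp add: yx inner_vec_def matrix_vector_mult_def sum_distrib_left power2_eq_square
            algebra_simps)
    also have "(\<Sum>i\<in>UNIV. \<Sum>j\<in>UNIV. d$i * (s$i * H$i$j * s$j) * d$j)
        = (\<Sum>i\<in>I. \<Sum>j\<in>I. d$i * (s$i * H$i$j * s$j) * d$j)"
    proof -
      have "(\<Sum>i\<in>UNIV. \<Sum>j\<in>UNIV. d$i * (s$i * H$i$j * s$j) * d$j)
          = (\<Sum>i\<in>UNIV. \<Sum>j\<in>I. d$i * (s$i * H$i$j * s$j) * d$j)"
        by (intro sum.cong refl sum_restr[symmetric]) (simp add: d0)
      also have "\<dots> = (\<Sum>i\<in>I. \<Sum>j\<in>I. d$i * (s$i * H$i$j * s$j) * d$j)"
        by (rule sum_restr[symmetric]) (simp add: d0)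
      finally show ?thesis .
    qed
    finally show ?thesis by (simp add: subquad_def SHS s_def)
  qed
  have nrm: "norm (y - xk) \<le> t * subnorm I d"
  proof -
    have "norm (\<chi> i. s$i * d$i) = sqrt (\<Sum>i\<in>UNIV. (s$i * d$i)^2)"
      by (simp add: norm_vec_def L2_set_def)
    also have "(\<Sum>i\<in>UNIV. (s$i * d$i)^2) = (\<Sum>i\<in>I. (s$i * d$i)^2)"
      by (rule sum_restr[symmetric]) (simp add: d0)
    also have "\<dots> \<le> (\<Sum>i\<in>I. (d$i)^2)"
    proof (rule sum_mono)
      fix i
      have "\<bar>s$i\<bar> \<le> 1" using svec_abs[OF epsg(2) epsg(1)] by (simp add: s_def)
      then have "(s$i)^2 \<le> 1" by (simp add: abs_square_le_1)
      then have "(s$i)^2 * (d$i)^2 \<le> 1 * (d$i)^2" by (intro mult_right_mono) auto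
      then show "(s$i * d$i)^2 \<le> (d$i)^2" by (simp add: power_mult_distrib)
    qed
    finally have "norm (\<chi> i. s$i * d$i) \<le> subnorm I d"
      by (simp add: subnorm_def)
    then show ?thesis using t by (simp add: yx mult_left_mono)
  qed
  have cb: "norm (y - xk) ^ 3 \<le> t^3 * subnorm I d ^ 3"
    using power_mono[OF nrm, of 3] by (simp add: power_mult_distrib)
  have "phi f lam y \<le> phi f lam xk + t * subbil I g (Smat epsg xk) d
       + t^2 / 2 * subquad I (Smat epsg xk ** H ** Smat epsg xk) d + LH / 6 * t^3 * subnorm I d ^ 3"
    using cub l1 bil lin quad mult_left_mono[OF cb, of "LH/6"] LH_nonneg
    by (simp add: phi_def algebra_simps)
  then show "let I = Inz xk; S = Smat epsg xk; H = Hess xk; g = gvec grad lam xk;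
             d = dir epsg xk H g u in
         phi f lam (xk + t *\<^sub>R (S *v d))
           \<le> phi f lam xk + t * subbil I g S d + t^2 / 2 * subquad I (S ** H ** S) d
              + LH / 6 * t^3 * subnorm I d ^ 3"
    by (simp add: Let_def I_def g_def H_def d_def y_def)
qed

end
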